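(* Let $R$ be a generalized p.q.-Baer $*$-ring. Then for every $x\in R$ there exists $n\in\mathbb N$ such that $r_R((xR)^n)\cap (x^* )^nR=\{0\}$.
   Context: A $*$-ring is a ring with an involution; a projection is $e$ with $e=e^*=e^2$. $r_R(S)=\{a\in R: sa=0\ \forall s\in S\}$. A $*$-ring $R$ is a generalized p.q.-Baer $*$-ring if for every principal ideal $I$ of $R$ there exist a positive integer $n$ and a projection $e\in R$ with $r_R(I^n)=eR$; in the paper this is used in the form: for every $x\in R$ there are $n\in\mathbb N$ and a projection $e$ with $r_R((xR)^n)=eR$. Such a ring has a unity. *)

theory Defs
  imports Main
begin

definition involution :: "('a::ring_1 \<Rightarrow> 'a) \<Rightarrow> bool" where
  "involution s \<longleftrightarrow> (\<forall>a b. s (a + b) = s a + s b) \<and> (\<forall>a b. s (a * b) = s b * s a)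
     \<and> (\<forall>a. s (s a) = a)"

definition projection :: "('a::ring_1 \<Rightarrow> 'a) \<Rightarrow> 'a \<Rightarrow> bool" where
  "projection s e \<longleftrightarrow> e = s e \<and> e * e = e"

definition r_ann :: "'a::ring_1 set \<Rightarrow> 'a set" where
  "r_ann S = {a. \<forall>t\<in>S. t * a = 0}"

definition set_mult :: "'a::ring_1 set \<Rightarrow> 'a set \<Rightarrow> 'a set" where
  "set_mult A B = {a * b | a b. a \<in> A \<and> b \<in> B}"

fun set_pow :: "'a::ring_1 set \<Rightarrow> nat \<Rightarrow> 'a set" where
  "set_pow A 0 = {1}"
| "set_pow A (Suc n) = set_mult A (set_pow A n)"

definition ideal_pow :: "'a::ring_1 set \<Rightarrow> nat \<Rightarrow> 'a set" where
  "ideal_pow I n = {sum_list xs | xs. set xs \<subseteq> set_pow I n}"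

definition rprinc :: "'a::ring_1 \<Rightarrow> 'a set" where
  "rprinc x = {x * r | r. True}"

definition gen_pq_baer :: "('a::ring_1 \<Rightarrow> 'a) \<Rightarrow> bool" where
  "gen_pq_baer s \<longleftrightarrow> involution s \<and>
     (\<forall>x. \<exists>n\<ge>1. \<exists>e. projection s e \<and> r_ann (ideal_pow (rprinc x) n) = rprinc e)"

end

theory Submission
  imports Defs
begin

lemma inv_pow: assumes "involution s" shows "s (x ^ n) = s x ^ n"
proof (induction n)
  case 0
  have "s 1 = s 1 * s (s 1)" using assms unfolding involution_def
    by (metis mult.right_neutral)
  also have "... = s (s 1 * 1)" using assms unfolding involution_def by metis
  also have "... = 1" using assms unfolding involution_def by simp
  finally show ?case by simp
next
  case (Suc n)
  have "s (x ^ Suc n) = s (x * x ^ n)" by simp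
  also have "... = s (x ^ n) * s x" using assms unfolding involution_def by metis
  finally show ?case using Suc by (simp add: power_commutes)
qed

lemma inv_zero: assumes "involution s" shows "s 0 = 0"
proof -
  have "s (0 + 0) = s 0 + s 0" using assms unfolding involution_def by metis
  then show ?thesis by simp
qed

lemma pow_in_set_pow: "x ^ n \<in> set_pow (rprinc x) n"
proof (induction n)
  case 0 then show ?case by simp
next
  case (Suc n)
  have "x \<in> rprinc x" unfolding rprinc_def by (metis (mono_tags, lifting) mem_Collect_eq mult.right_neutral)
  then show ?case using Suc by (simp only: set_pow.simps power_Suc set_mult_def) blast
qed

lemma pow_in_ideal_pow: "x ^ n \<in> ideal_pow (rprinc x) n"
  unfolding ideal_pow_def
  by (rule CollectI, rule exI[of _ "[x ^ n]"]) (simp add: pow_in_set_pow)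

theorem mainTheorem3:
  fixes s :: "'a::ring_1 \<Rightarrow> 'a"
  assumes "gen_pq_baer s"
  shows "\<forall>x. \<exists>n\<ge>1. r_ann (ideal_pow (rprinc x) n) \<inter> rprinc (s x ^ n) = {0}"
proof
  fix x
  have inv: "involution s" using assms unfolding gen_pq_baer_def by auto
  obtain n e where n: "n \<ge> 1" and pe: "projection s e"
    and eq: "r_ann (ideal_pow (rprinc x) n) = rprinc e"
    using assms unfolding gen_pq_baer_def by blast
  have "e \<in> rprinc e" unfolding rprinc_def by (metis (mono_tags, lifting) mem_Collect_eq mult.right_neutral)
  then have "x ^ n * e = 0" using eq pow_in_ideal_pow[of x n] unfolding r_ann_def by auto
  then have "s (x ^ n * e) = 0" using inv_zero[OF inv] by simp
  then have ez: "e * s x ^ n = 0" using inv pe inv_pow[OF inv]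
    unfolding involution_def projection_def by metis
  have "r_ann (ideal_pow (rprinc x) n) \<inter> rprinc (s x ^ n) = {0}"
  proof
    show "{0} \<subseteq> r_ann (ideal_pow (rprinc x) n) \<inter> rprinc (s x ^ n)"
      unfolding r_ann_def rprinc_def by (auto intro: exI[of _ 0])
  next
    show "r_ann (ideal_pow (rprinc x) n) \<inter> rprinc (s x ^ n) \<subseteq> {0}"
    proof
      fix a assume a: "a \<in> r_ann (ideal_pow (rprinc x) n) \<inter> rprinc (s x ^ n)"
      then obtain r' where r': "a = e * r'" using eq unfolding rprinc_def by auto
      obtain r where r: "a = s x ^ n * r" using a unfolding rprinc_def by auto
      have "a = e * a" using r' pe unfolding projection_def by (metis mult.assoc)
      also have "... = e * s x ^ n * r" using r by (simp add: mult.assoc)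
      also have "... = 0" using ez by simp
      finally show "a \<in> {0}" by simp
    qed
  qed
  then show "\<exists>n\<ge>1. r_ann (ideal_pow (rprinc x) n) \<inter> rprinc (s x ^ n) = {0}" using n by blast
qed

end
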